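(* Let $g(x)=\sum_{n\ge 1}\frac{2\,(4n+1)!}{(n+1)!\,(3n+2)!}\,x^n$, regarded as a formal power series. For integers $n\ge1$ and $r\ge 2$ define $A_r(n)=\frac{[x^n](g(x))^r}{[x^n]g(x)}$ and $B_r=\lim_{n\to\infty}A_r(n)$. Then for all integers $n\ge 1$: $$A_2(n)=\frac{10(n-1)(n^2+14n+12)}{3(3n+5)(3n+4)(n+2)},\qquad B_2=\frac{10}{27};$$ $$A_3(n)=\frac{5(n-1)(n-2)(5n^4+160n^3+1803n^2+3768n+2016)}{3(3n+8)(3n+5)(3n+7)(3n+4)(n+3)(n+2)},\qquad B_3=\frac{25}{243};$$ $$A_4(n)=\frac{20(n-1)(n-2)(n-3)(25n^6+1350n^5+31495n^4+347406n^3+1211092n^2+1580304n+665280)}{27(3n+11)(3n+8)(3n+5)(3n+10)(3n+7)(3n+4)(n+4)(n+3)(n+2)},\qquad B_4=\frac{500}{19683}.$$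
   Context: For a formal power series $f(x)$, $[x^n]f(x)$ denotes the coefficient of $x^n$ in $f(x)$. *)

theory Defs
  imports Complex_Main "HOL-Computational_Algebra.Formal_Power_Series"
begin

definition g_fps :: "real fps" where
  "g_fps = Abs_fps (\<lambda>n. if n = 0 then 0
      else 2 * fact (4*n+1) / (fact (n+1) * fact (3*n+2)))"

definition A_ratio :: "nat \<Rightarrow> nat \<Rightarrow> real" where
  "A_ratio r n = fps_nth (g_fps ^ r) n / fps_nth g_fps n"

end

theory Submission
  imports Defs "HOL-Real_Asymp.Real_Asymp"
begin


definition tt :: "nat \<Rightarrow> nat \<Rightarrow> real" where
  "tt k n = (case k of 0 \<Rightarrow> (if n = 0 then 1 else 0)
     | Suc j \<Rightarrow> real (j+1) * fact (4*n+j) / (fact n * fact (3*n+j+1)))"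

definition PP :: "nat \<Rightarrow> real fps" where "PP k = Abs_fps (tt k)"

lemma fact_S: "(fact (n+1) :: real) = (real n + 1) * fact n"
  by (simp add: algebra_simps)

lemma tt_rec:
  assumes "k \<ge> 1"
  shows "tt k (Suc m) = tt (k-1) (Suc m) + tt (k+3) m"
proof -
  obtain j where k: "k = Suc j" using assms by (cases k) auto
  show ?thesis
  proof (cases j)
    case 0
    have e1: "fact (4 * Suc m) = (real (4*m+3)+1) * (fact (4*m+3) :: real)"
      using fact_S[of "4*m+3"] by (simp add: algebra_simps)
    have e2: "fact (Suc m) = (real m+1) * (fact m :: real)"
      using fact_S[of m] by simp
    have e3: "3 * Suc m + 1 = 3*m+4" "4*m+3+1 = 4*m+4" "3*m+(3+1) = 3*m+4" "4*m+3 = 4*m+3" by simp_all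
    have pos: "fact m > (0::real)" "fact (3*m+4) > (0::real)" "fact (4*m+3) > (0::real)" by simp_all
    have l1: "tt k (Suc m) = (real (4*m+3)+1) * fact (4*m+3) / ((real m+1) * fact m * fact (3*m+4))"
      unfolding tt_def k 0 using e1 e2 e3 by (simp add: add_ac mult_ac)
    have l2: "tt (k-1) (Suc m) = 0" unfolding tt_def k 0 by simp
    have l3: "tt (k+3) m = 4 * fact (4*m+3) / (fact m * fact (3*m+4))"
    proof -
      have h: "k + 3 = Suc 3" using k 0 by simp
      show ?thesis unfolding tt_def h by (simp del: fact_Suc add: algebra_simps)
    qed
    have key: "(real (4*m+3)+1) * A / ((real m+1) * C * B) = 0 + 4 * A / (C * B)"
      if "B > 0" "C > 0" for A B C :: real
    proof -
      have h: "real (4*m+3)+1 = 4 * (real m + 1)" by simp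
      have "B \<noteq> 0" "C \<noteq> 0" "real m + 1 \<noteq> 0" using that by simp_all
      then show ?thesis unfolding h by (simp add: divide_simps)
    qed
    show ?thesis unfolding l1 l2 l3 by (rule key) (use pos in auto)
  next
    case (Suc i)
    let ?N = "4*m+i+4"
    have e1: "fact (4 * Suc m + Suc i) = (real ?N+1) * (fact ?N :: real)"
      using fact_S[of ?N] by (simp add: algebra_simps)
    have e1': "4 * Suc m + i = ?N" "4*m + (Suc i + 3) = ?N" by simp_all
    have e2: "fact (Suc m) = (real m+1) * (fact m :: real)"
      using fact_S[of m] by simp
    have e3: "fact (3 * Suc m + Suc i + 1) = (real (3*m+i+4) + 1) * (fact (3*m+i+4) :: real)"
      using fact_S[of "3*m+i+4"] by (simp add: algebra_simps)
    have e3': "3 * Suc m + i + 1 = 3*m+i+4" "3*m + (Suc i + 3) + 1 = 3*m+i+5" by simp_all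
    have e4: "fact (3*m+i+5) = (real (3*m+i+4) + 1) * (fact (3*m+i+4) :: real)"
      using fact_S[of "3*m+i+4"] by (simp add: algebra_simps)
    have pos: "fact m > (0::real)" "fact (3*m+i+4) > (0::real)" "fact ?N > (0::real)" by simp_all
    have l1: "tt k (Suc m) = real (i+2) * (real ?N+1) * fact ?N / ((real m+1) * fact m * ((real (3*m+i+4) + 1) * fact (3*m+i+4)))"
      unfolding tt_def k Suc using e1 e2 e3 by (simp add: algebra_simps)
    have l2: "tt (k-1) (Suc m) = real (i+1) * fact ?N / ((real m+1) * fact m * fact (3*m+i+4))"
      unfolding tt_def k Suc using e1' e2 e3' by (simp add: add_ac)
    have l3: "tt (k+3) m = real (i+5) * fact ?N / (fact m * ((real (3*m+i+4) + 1) * fact (3*m+i+4)))"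
    proof -
      have h: "k + 3 = Suc (i+4)" using k Suc by simp
      have q: "4*m+i+4 = 4*m+(i+4)" "3*m+i+4 = 3*m+(i+4)" "i+4+1 = i+5" by simp_all
      show ?thesis unfolding tt_def h nat.case(2) by (simp only: fact_S q)
    qed
    have key: "real (i+2) * (real ?N+1) * A / ((real m+1) * C * ((real (3*m+i+4) + 1) * B))
       = real (i+1) * A / ((real m+1) * C * B) + real (i+5) * A / (C * ((real (3*m+i+4) + 1) * B))"
      if "B > 0" "C > 0" for A B C :: real
    proof -
      have "B \<noteq> 0" "C \<noteq> 0" "real m + 1 \<noteq> 0" "real (3*m+i+4) + 1 \<noteq> 0" using that by simp_all
      then show ?thesis by (simp add: divide_simps; simp add: algebra_simps)
    qed
    show ?thesis unfolding l1 l2 l3 by (rule key) (use pos in auto)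
  qed
qed

lemma tt_zero: "tt k 0 = 1"
  by (cases k) (auto simp: tt_def)

lemma PP_rec:
  assumes "k \<ge> 1"
  shows "PP k = PP (k-1) + fps_X * PP (k+3)"
proof (rule fps_ext)
  fix n show "fps_nth (PP k) n = fps_nth (PP (k-1) + fps_X * PP (k+3)) n"
    using tt_rec[OF assms] by (cases n) (simp_all add: PP_def fps_X_mult_nth tt_zero)
qed

lemma PP_uniq:
  fixes R S :: "nat \<Rightarrow> real fps"
  assumes "R 0 = S 0"
    and "\<And>k. k \<ge> 1 \<Longrightarrow> R k = R (k-1) + fps_X * R (k+3)"
    and "\<And>k. k \<ge> 1 \<Longrightarrow> S k = S (k-1) + fps_X * S (k+3)"
  shows "R k = S k"
proof -
  have "\<forall>k. fps_nth (R k) n = fps_nth (S k) n" for n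
  proof (induction n)
    case 0
    show ?case
    proof
      fix k show "fps_nth (R k) 0 = fps_nth (S k) 0"
      proof (induction k)
        case 0 then show ?case using assms(1) by simp
      next
        case (Suc k)
        then show ?case using assms(2)[of "Suc k"] assms(3)[of "Suc k"] by (simp add: fps_X_mult_nth)
      qed
    qed
  next
    case (Suc m)
    note IHm = Suc.IH
    show ?case
    proof
      fix k show "fps_nth (R k) (Suc m) = fps_nth (S k) (Suc m)"
      proof (induction k)
        case 0 then show ?case using assms(1) by simp
      next
        case (Suc k)
        then show ?case using assms(2)[of "Suc k"] assms(3)[of "Suc k"] IHm
          by (simp add: fps_X_mult_nth)
      qed
    qed
  qed
  then show ?thesis by (simp add: fps_eq_iff)
qed

lemma PP0: "PP 0 = 1"
  by (rule fps_ext) (simp add: PP_def tt_def)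

lemma PP_mult: "PP a * PP k = PP (a + k)"
proof (rule PP_uniq[where R = "\<lambda>k. PP a * PP k" and S = "\<lambda>k. PP (a+k)"])
  show "PP a * PP 0 = PP (a + 0)" by (simp add: PP0)
next
  fix k :: nat assume "k \<ge> 1"
  then show "PP a * PP k = PP a * PP (k - 1) + fps_X * (PP a * PP (k + 3))"
    using PP_rec[of k] by (simp add: algebra_simps)
next
  fix k :: nat assume "k \<ge> 1"
  then show "PP (a + k) = PP (a + (k - 1)) + fps_X * PP (a + (k + 3))"
    using PP_rec[of "a+k"] by (simp add: algebra_simps)
qed

lemma PP_pow: "PP 1 ^ k = PP k"
  by (induction k) (simp_all add: PP0 PP_mult)

lemma g_eq: "g_fps = 2 * PP 2 - PP 3 - 1"
proof (rule fps_ext)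
  fix n
  show "fps_nth g_fps n = fps_nth (2 * PP 2 - PP 3 - 1) n"
  proof (cases n)
    case 0 then show ?thesis by (simp add: g_fps_def PP_def tt_zero numeral_fps_const)
  next
    case (Suc m)
    have e1: "fact (4*n+2) = (4*real n+2) * (fact (4*n+1) :: real)"
      using fact_S[of "4*n+1"] by (simp add: algebra_simps)
    have e2: "fact (3*n+3) = (3*real n+3) * (fact (3*n+2) :: real)"
    proof -
      have h: "3*n+3 = Suc (3*n+2)" by simp
      show ?thesis unfolding h fact_Suc by (simp del: fact_Suc)
    qed
    have e3: "fact (n+1) = (real n+1) * (fact n :: real)"
      using fact_S[of n] by simp
    have pos: "fact n > (0::real)" "fact (3*n+2) > (0::real)" "fact (4*n+1) > (0::real)" by simp_all
    have nz: "n \<noteq> 0" using Suc by simp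
    have a: "fps_nth g_fps n = 2 * fact (4*n+1) / ((real n+1) * fact n * fact (3*n+2))"
      using nz e3 by (simp add: g_fps_def)
    have b: "fps_nth (2 * PP 2 - PP 3 - 1) n = 2 * (2 * fact (4*n+1) / (fact n * fact (3*n+2)))
        - 3 * ((4*real n+2) * fact (4*n+1)) / (fact n * ((3*real n+3) * fact (3*n+2)))"
      using nz e1 e2 by (simp add: PP_def tt_def numeral_fps_const eval_nat_numeral del: fact_Suc)
    have key: "2 * A / ((x+1) * C * B) = 2 * (2 * A / (C * B))
        - 3 * ((4*x+2) * A) / (C * ((3*x+3) * B))"
      if "B > 0" "C > 0" "x \<ge> 0" for A B C x :: real
    proof -
      have "x + 1 \<noteq> 0" "3*x+3 \<noteq> 0" "B \<noteq> 0" "C \<noteq> 0" using that by simp_all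
      then show ?thesis by (simp add: divide_simps; simp add: algebra_simps)
    qed
    show ?thesis unfolding a b using pos by (intro key) simp_all

  qed
qed

lemma tt_step: "tt (Suc (Suc j)) n = tt (Suc j) n * ((real j + 2) / (real j + 1) * (4 * real n + real j + 1) / (3 * real n + real j + 2))"
proof -
  have e1: "fact (4*n+j+1) = (real (4*n+j) + 1) * (fact (4*n+j) :: real)"
    using fact_S[of "4*n+j"] by simp
  have e2: "fact (3*n+Suc j+1) = (real (3*n+j+1) + 1) * (fact (3*n+j+1) :: real)"
  proof -
    have h: "3*n+Suc j+1 = Suc (3*n+j+1)" by simp
    show ?thesis unfolding h fact_Suc by (simp del: fact_Suc)
  qed
  have key: "(real j + 2) * ((real (4*n+j) + 1) * A) / (C * ((real (3*n+j+1) + 1) * B))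
     = (real j + 1) * A / (C * B) * ((real j + 2) / (real j + 1) * (4 * real n + real j + 1) / (3 * real n + real j + 2))"
    if "A > 0" "B > 0" "C > 0" for A B C :: real
  proof -
    have "A \<noteq> 0" "B \<noteq> 0" "C \<noteq> 0" "real j + 1 \<noteq> 0" "3 * real n + real j + 2 \<noteq> 0" using that by simp_all
    then show ?thesis by (simp add: divide_simps; simp add: algebra_simps)
  qed
  have l: "tt (Suc (Suc j)) n = (real j + 2) * ((real (4*n+j) + 1) * fact (4*n+j)) / (fact n * ((real (3*n+j+1) + 1) * fact (3*n+j+1)))"
    unfolding tt_def using e1 e2 by (simp del: fact_Suc add: add_ac)
  have r: "tt (Suc j) n = (real j + 1) * fact (4*n+j) / (fact n * fact (3*n+j+1))"
    unfolding tt_def by simp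
  show ?thesis unfolding l r by (rule key) simp_all
qed

lemma tt_3: "tt 3 n = tt 2 n * (3 / 2 * (4 * real n + 2) / (3 * real n + 3))"
  using tt_step[of 1 n] by (simp add: eval_nat_numeral algebra_simps)

lemma tt_4: "tt 4 n = tt 3 n * (4 / 3 * (4 * real n + 3) / (3 * real n + 4))"
  using tt_step[of 2 n] by (simp add: eval_nat_numeral algebra_simps)

lemma tt_5: "tt 5 n = tt 4 n * (5 / 4 * (4 * real n + 4) / (3 * real n + 5))"
  using tt_step[of 3 n] by (simp add: eval_nat_numeral algebra_simps)

lemma tt_6: "tt 6 n = tt 5 n * (6 / 5 * (4 * real n + 5) / (3 * real n + 6))"
  using tt_step[of 4 n] by (simp add: eval_nat_numeral algebra_simps)

lemma tt_7: "tt 7 n = tt 6 n * (7 / 6 * (4 * real n + 6) / (3 * real n + 7))"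
  using tt_step[of 5 n] by (simp add: eval_nat_numeral algebra_simps)

lemma tt_8: "tt 8 n = tt 7 n * (8 / 7 * (4 * real n + 7) / (3 * real n + 8))"
  using tt_step[of 6 n] by (simp add: eval_nat_numeral algebra_simps)

lemma tt_9: "tt 9 n = tt 8 n * (9 / 8 * (4 * real n + 8) / (3 * real n + 9))"
  using tt_step[of 7 n] by (simp add: eval_nat_numeral algebra_simps)

lemma tt_10: "tt 10 n = tt 9 n * (10 / 9 * (4 * real n + 9) / (3 * real n + 10))"
  using tt_step[of 8 n] by (simp add: eval_nat_numeral algebra_simps)

lemma tt_11: "tt 11 n = tt 10 n * (11 / 10 * (4 * real n + 10) / (3 * real n + 11))"
  using tt_step[of 9 n] by (simp add: eval_nat_numeral algebra_simps)

lemma tt_12: "tt 12 n = tt 11 n * (12 / 11 * (4 * real n + 11) / (3 * real n + 12))"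
  using tt_step[of 10 n] by (simp add: eval_nat_numeral algebra_simps)

lemma ttp_3: "tt 3 n = tt 2 n * (3 / 2 * (4 * real n + 2) / (3 * real n + 3))"
  by (simp only: tt_3)

lemma ttp_4: "tt 4 n = tt 2 n * (3 / 2 * (4 * real n + 2) / (3 * real n + 3)) * (4 / 3 * (4 * real n + 3) / (3 * real n + 4))"
  by (simp only: tt_3 tt_4)

lemma ttp_5: "tt 5 n = tt 2 n * (3 / 2 * (4 * real n + 2) / (3 * real n + 3)) * (4 / 3 * (4 * real n + 3) / (3 * real n + 4)) * (5 / 4 * (4 * real n + 4) / (3 * real n + 5))"
  by (simp only: tt_3 tt_4 tt_5)

lemma ttp_6: "tt 6 n = tt 2 n * (3 / 2 * (4 * real n + 2) / (3 * real n + 3)) * (4 / 3 * (4 * real n + 3) / (3 * real n + 4)) * (5 / 4 * (4 * real n + 4) / (3 * real n + 5)) * (6 / 5 * (4 * real n + 5) / (3 * real n + 6))"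
  by (simp only: tt_3 tt_4 tt_5 tt_6)

lemma ttp_7: "tt 7 n = tt 2 n * (3 / 2 * (4 * real n + 2) / (3 * real n + 3)) * (4 / 3 * (4 * real n + 3) / (3 * real n + 4)) * (5 / 4 * (4 * real n + 4) / (3 * real n + 5)) * (6 / 5 * (4 * real n + 5) / (3 * real n + 6)) * (7 / 6 * (4 * real n + 6) / (3 * real n + 7))"
  by (simp only: tt_3 tt_4 tt_5 tt_6 tt_7)

lemma ttp_8: "tt 8 n = tt 2 n * (3 / 2 * (4 * real n + 2) / (3 * real n + 3)) * (4 / 3 * (4 * real n + 3) / (3 * real n + 4)) * (5 / 4 * (4 * real n + 4) / (3 * real n + 5)) * (6 / 5 * (4 * real n + 5) / (3 * real n + 6)) * (7 / 6 * (4 * real n + 6) / (3 * real n + 7)) * (8 / 7 * (4 * real n + 7) / (3 * real n + 8))"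
  by (simp only: tt_3 tt_4 tt_5 tt_6 tt_7 tt_8)

lemma ttp_9: "tt 9 n = tt 2 n * (3 / 2 * (4 * real n + 2) / (3 * real n + 3)) * (4 / 3 * (4 * real n + 3) / (3 * real n + 4)) * (5 / 4 * (4 * real n + 4) / (3 * real n + 5)) * (6 / 5 * (4 * real n + 5) / (3 * real n + 6)) * (7 / 6 * (4 * real n + 6) / (3 * real n + 7)) * (8 / 7 * (4 * real n + 7) / (3 * real n + 8)) * (9 / 8 * (4 * real n + 8) / (3 * real n + 9))"
  by (simp only: tt_3 tt_4 tt_5 tt_6 tt_7 tt_8 tt_9)

lemma ttp_10: "tt 10 n = tt 2 n * (3 / 2 * (4 * real n + 2) / (3 * real n + 3)) * (4 / 3 * (4 * real n + 3) / (3 * real n + 4)) * (5 / 4 * (4 * real n + 4) / (3 * real n + 5)) * (6 / 5 * (4 * real n + 5) / (3 * real n + 6)) * (7 / 6 * (4 * real n + 6) / (3 * real n + 7)) * (8 / 7 * (4 * real n + 7) / (3 * real n + 8)) * (9 / 8 * (4 * real n + 8) / (3 * real n + 9)) * (10 / 9 * (4 * real n + 9) / (3 * real n + 10))"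
  by (simp only: tt_3 tt_4 tt_5 tt_6 tt_7 tt_8 tt_9 tt_10)

lemma ttp_11: "tt 11 n = tt 2 n * (3 / 2 * (4 * real n + 2) / (3 * real n + 3)) * (4 / 3 * (4 * real n + 3) / (3 * real n + 4)) * (5 / 4 * (4 * real n + 4) / (3 * real n + 5)) * (6 / 5 * (4 * real n + 5) / (3 * real n + 6)) * (7 / 6 * (4 * real n + 6) / (3 * real n + 7)) * (8 / 7 * (4 * real n + 7) / (3 * real n + 8)) * (9 / 8 * (4 * real n + 8) / (3 * real n + 9)) * (10 / 9 * (4 * real n + 9) / (3 * real n + 10)) * (11 / 10 * (4 * real n + 10) / (3 * real n + 11))"
  by (simp only: tt_3 tt_4 tt_5 tt_6 tt_7 tt_8 tt_9 tt_10 tt_11)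

lemma ttp_12: "tt 12 n = tt 2 n * (3 / 2 * (4 * real n + 2) / (3 * real n + 3)) * (4 / 3 * (4 * real n + 3) / (3 * real n + 4)) * (5 / 4 * (4 * real n + 4) / (3 * real n + 5)) * (6 / 5 * (4 * real n + 5) / (3 * real n + 6)) * (7 / 6 * (4 * real n + 6) / (3 * real n + 7)) * (8 / 7 * (4 * real n + 7) / (3 * real n + 8)) * (9 / 8 * (4 * real n + 8) / (3 * real n + 9)) * (10 / 9 * (4 * real n + 9) / (3 * real n + 10)) * (11 / 10 * (4 * real n + 10) / (3 * real n + 11)) * (12 / 11 * (4 * real n + 11) / (3 * real n + 12))"
  by (simp only: tt_3 tt_4 tt_5 tt_6 tt_7 tt_8 tt_9 tt_10 tt_11 tt_12)

lemma g_nth: "n \<ge> 1 \<Longrightarrow> fps_nth g_fps n = tt 2 n / (real n + 1)"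
proof -
  assume "n \<ge> 1"
  then have "fps_nth g_fps n = 2 * tt 2 n - tt 3 n"
    by (simp add: g_eq PP_def numeral_fps_const)
  also have "\<dots> = tt 2 n / (real n + 1)"
  proof -
    have "real n + 1 \<noteq> 0" "3 * real n + 3 \<noteq> 0" by (simp_all add: add_nonneg_eq_0_iff)
    then show ?thesis unfolding tt_3 by (simp add: divide_simps; simp add: algebra_simps)
  qed
  finally show ?thesis .
qed

lemma tt_pos: "tt 2 n > 0"
  by (simp add: tt_def)

lemma gpow2_poly: fixes P :: "'a::comm_ring_1" shows "(2*P^2 - P^3 - 1)^2 = P^6 - 4 * P^5 + 4 * P^4 + 2 * P^3 - 4 * P^2 + 1"
  by (simp add: eval_nat_numeral algebra_simps)

lemma g_pow2: "g_fps^2 = PP 6 - 4 * PP 5 + 4 * PP 4 + 2 * PP 3 - 4 * PP 2 + 1"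
proof -
  have h: "g_fps = 2 * PP 1 ^ 2 - PP 1 ^ 3 - 1" by (simp only: g_eq PP_pow)
  have "g_fps^2 = PP 1^6 - 4 * PP 1^5 + 4 * PP 1^4 + 2 * PP 1^3 - 4 * PP 1^2 + 1" unfolding h by (rule gpow2_poly)
  then show ?thesis by (simp only: PP_pow)
qed

lemma g_pow2_nth: "n \<ge> 1 \<Longrightarrow> fps_nth (g_fps^2) n = tt 6 n - 4 * tt 5 n + 4 * tt 4 n + 2 * tt 3 n - 4 * tt 2 n"
  by (simp add: g_pow2 PP_def numeral_fps_const)

lemma key2: "((T * (3 / 2 * (4 * x + 2) / (3 * x + 3)) * (4 / 3 * (4 * x + 3) / (3 * x + 4)) * (5 / 4 * (4 * x + 4) / (3 * x + 5)) * (6 / 5 * (4 * x + 5) / (3 * x + 6))) - 4 * (T * (3 / 2 * (4 * x + 2) / (3 * x + 3)) * (4 / 3 * (4 * x + 3) / (3 * x + 4)) * (5 / 4 * (4 * x + 4) / (3 * x + 5))) + 4 * (T * (3 / 2 * (4 * x + 2) / (3 * x + 3)) * (4 / 3 * (4 * x + 3) / (3 * x + 4))) + 2 * (T * (3 / 2 * (4 * x + 2) / (3 * x + 3))) - 4 * T) / (T / (x + 1)) = 10 * (x - 1) * ((x)^2 + 14 * x + 12)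
        / (3 * (3 * x + 5) * (3 * x + 4) * (x + 2))"
  if "T > 0" "x \<ge> 1" for T x :: real
proof -
  have "3 * x + 3 \<noteq> 0" "3 * x + 4 \<noteq> 0" "3 * x + 5 \<noteq> 0" "3 * x + 6 \<noteq> 0" "3 * x + 7 \<noteq> 0" "3 * x + 8 \<noteq> 0" "3 * x + 9 \<noteq> 0" "3 * x + 10 \<noteq> 0" "3 * x + 11 \<noteq> 0" "3 * x + 12 \<noteq> 0" "x + 1 \<noteq> 0" "x + 2 \<noteq> 0" "x + 3 \<noteq> 0" "x + 4 \<noteq> 0" "T \<noteq> 0" using that by simp_all
  then show ?thesis using that by (simp add: divide_simps; simp add: algebra_simps eval_nat_numeral)
qed

lemma A2: "n \<ge> 1 \<Longrightarrow> A_ratio 2 n = 10 * (real n - 1) * ((real n)^2 + 14 * real n + 12)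
        / (3 * (3 * real n + 5) * (3 * real n + 4) * (real n + 2))"
proof -
  assume n: "n \<ge> 1"
  have "A_ratio 2 n = ((tt 2 n * (3 / 2 * (4 * real n + 2) / (3 * real n + 3)) * (4 / 3 * (4 * real n + 3) / (3 * real n + 4)) * (5 / 4 * (4 * real n + 4) / (3 * real n + 5)) * (6 / 5 * (4 * real n + 5) / (3 * real n + 6))) - 4 * (tt 2 n * (3 / 2 * (4 * real n + 2) / (3 * real n + 3)) * (4 / 3 * (4 * real n + 3) / (3 * real n + 4)) * (5 / 4 * (4 * real n + 4) / (3 * real n + 5))) + 4 * (tt 2 n * (3 / 2 * (4 * real n + 2) / (3 * real n + 3)) * (4 / 3 * (4 * real n + 3) / (3 * real n + 4))) + 2 * (tt 2 n * (3 / 2 * (4 * real n + 2) / (3 * real n + 3))) - 4 * tt 2 n) / (tt 2 n / (real n + 1))"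
    unfolding A_ratio_def g_pow2_nth[OF n] g_nth[OF n] ttp_3 ttp_4 ttp_5 ttp_6 ..
  also have "\<dots> = 10 * (real n - 1) * ((real n)^2 + 14 * real n + 12)
        / (3 * (3 * real n + 5) * (3 * real n + 4) * (real n + 2))"
    by (rule key2) (use n tt_pos[of n] in simp_all)
  finally show ?thesis .
qed

lemma L2: "(\<lambda>n. A_ratio 2 n) \<longlonglongrightarrow> 10 / 27"
proof -
  have "(\<lambda>n::nat. 10 * (real n - 1) * ((real n)^2 + 14 * real n + 12)
        / (3 * (3 * real n + 5) * (3 * real n + 4) * (real n + 2))) \<longlonglongrightarrow> 10 / 27"
    by real_asymp
  moreover have "eventually (\<lambda>n. 10 * (real n - 1) * ((real n)^2 + 14 * real n + 12)
        / (3 * (3 * real n + 5) * (3 * real n + 4) * (real n + 2)) = A_ratio 2 n) sequentially"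
    using eventually_ge_at_top[of 1] by eventually_elim (simp add: A2)
  ultimately show ?thesis using Lim_transform_eventually by blast
qed

lemma gpow3_poly: fixes P :: "'a::comm_ring_1" shows "(2*P^2 - P^3 - 1)^3 = - (P^9) + 6 * P^8 - 12 * P^7 + 5 * P^6 + 12 * P^5 - 12 * P^4 - 3 * P^3 + 6 * P^2 - 1"
  by (simp add: eval_nat_numeral algebra_simps)

lemma g_pow3: "g_fps^3 = - (PP 9) + 6 * PP 8 - 12 * PP 7 + 5 * PP 6 + 12 * PP 5 - 12 * PP 4 - 3 * PP 3 + 6 * PP 2 - 1"
proof -
  have h: "g_fps = 2 * PP 1 ^ 2 - PP 1 ^ 3 - 1" by (simp only: g_eq PP_pow)
  have "g_fps^3 = - (PP 1^9) + 6 * PP 1^8 - 12 * PP 1^7 + 5 * PP 1^6 + 12 * PP 1^5 - 12 * PP 1^4 - 3 * PP 1^3 + 6 * PP 1^2 - 1" unfolding h by (rule gpow3_poly)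
  then show ?thesis by (simp only: PP_pow)
qed

lemma g_pow3_nth: "n \<ge> 1 \<Longrightarrow> fps_nth (g_fps^3) n = - (tt 9 n) + 6 * tt 8 n - 12 * tt 7 n + 5 * tt 6 n + 12 * tt 5 n - 12 * tt 4 n - 3 * tt 3 n + 6 * tt 2 n"
  by (simp add: g_pow3 PP_def numeral_fps_const)

lemma key3: "(- (T * (3 / 2 * (4 * x + 2) / (3 * x + 3)) * (4 / 3 * (4 * x + 3) / (3 * x + 4)) * (5 / 4 * (4 * x + 4) / (3 * x + 5)) * (6 / 5 * (4 * x + 5) / (3 * x + 6)) * (7 / 6 * (4 * x + 6) / (3 * x + 7)) * (8 / 7 * (4 * x + 7) / (3 * x + 8)) * (9 / 8 * (4 * x + 8) / (3 * x + 9))) + 6 * (T * (3 / 2 * (4 * x + 2) / (3 * x + 3)) * (4 / 3 * (4 * x + 3) / (3 * x + 4)) * (5 / 4 * (4 * x + 4) / (3 * x + 5)) * (6 / 5 * (4 * x + 5) / (3 * x + 6)) * (7 / 6 * (4 * x + 6) / (3 * x + 7)) * (8 / 7 * (4 * x + 7) / (3 * x + 8))) - 12 * (T * (3 / 2 * (4 * x + 2) / (3 * x + 3)) * (4 / 3 * (4 * x + 3) / (3 * x + 4)) * (5 / 4 * (4 * x + 4) / (3 * x + 5)) * (6 / 5 * (4 * x + 5) / (3 * x + 6)) * (7 / 6 * (4 * x + 6) / (3 * x + 7))) + 5 * (T * (3 / 2 * (4 * x + 2) / (3 * x + 3)) * (4 / 3 * (4 * x + 3) / (3 * x + 4)) *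 (5 / 4 * (4 * x + 4) / (3 * x + 5)) * (6 / 5 * (4 * x + 5) / (3 * x + 6))) + 12 * (T * (3 / 2 * (4 * x + 2) / (3 * x + 3)) * (4 / 3 * (4 * x + 3) / (3 * x + 4)) * (5 / 4 * (4 * x + 4) / (3 * x + 5))) - 12 * (T * (3 / 2 * (4 * x + 2) / (3 * x + 3)) * (4 / 3 * (4 * x + 3) / (3 * x + 4))) - 3 * (T * (3 / 2 * (4 * x + 2) / (3 * x + 3))) + 6 * T) / (T / (x + 1)) = 5 * (x - 1) * (x - 2)
        * (5 * (x)^4 + 160 * (x)^3 + 1803 * (x)^2 + 3768 * x + 2016)
        / (3 * (3 * x + 8) * (3 * x + 5) * (3 * x + 7) * (3 * x + 4)
             * (x + 3) * (x + 2))"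
  if "T > 0" "x \<ge> 1" for T x :: real
proof -
  have "3 * x + 3 \<noteq> 0" "3 * x + 4 \<noteq> 0" "3 * x + 5 \<noteq> 0" "3 * x + 6 \<noteq> 0" "3 * x + 7 \<noteq> 0" "3 * x + 8 \<noteq> 0" "3 * x + 9 \<noteq> 0" "3 * x + 10 \<noteq> 0" "3 * x + 11 \<noteq> 0" "3 * x + 12 \<noteq> 0" "x + 1 \<noteq> 0" "x + 2 \<noteq> 0" "x + 3 \<noteq> 0" "x + 4 \<noteq> 0" "T \<noteq> 0" using that by simp_all
  then show ?thesis using that by (simp add: divide_simps; simp add: algebra_simps eval_nat_numeral)
qed

lemma A3: "n \<ge> 1 \<Longrightarrow> A_ratio 3 n = 5 * (real n - 1) * (real n - 2)
        * (5 * (real n)^4 + 160 * (real n)^3 + 1803 * (real n)^2 + 3768 * real n + 2016)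
        / (3 * (3 * real n + 8) * (3 * real n + 5) * (3 * real n + 7) * (3 * real n + 4)
             * (real n + 3) * (real n + 2))"
proof -
  assume n: "n \<ge> 1"
  have "A_ratio 3 n = (- (tt 2 n * (3 / 2 * (4 * real n + 2) / (3 * real n + 3)) * (4 / 3 * (4 * real n + 3) / (3 * real n + 4)) * (5 / 4 * (4 * real n + 4) / (3 * real n + 5)) * (6 / 5 * (4 * real n + 5) / (3 * real n + 6)) * (7 / 6 * (4 * real n + 6) / (3 * real n + 7)) * (8 / 7 * (4 * real n + 7) / (3 * real n + 8)) * (9 / 8 * (4 * real n + 8) / (3 * real n + 9))) + 6 * (tt 2 n * (3 / 2 * (4 * real n + 2) / (3 * real n + 3)) * (4 / 3 * (4 * real n + 3) / (3 * real n + 4)) * (5 / 4 * (4 * real n + 4) / (3 * real n + 5)) * (6 / 5 * (4 * real n + 5) / (3 * real n + 6)) * (7 / 6 * (4 * real n + 6) / (3 * real n + 7)) * (8 / 7 * (4 * real n + 7) / (3 * real n + 8))) - 12 * (tt 2 n * (3 / 2 * (4 * real n + 2) / (3 * real n + 3)) * (4 / 3 * (4 * real n + 3) / (3 * real n + 4)) * (5 / 4 * (4 * real n + 4) / (3 * real n + 5)) * (6 / 5 * (4 * real n + 5) / (3 * real n + 6)) * (7 / 6 * (4 * real n + 6) / (3 * real n + 7))) + 5 * (tt 2 n * (3 / 2 * (4 * real n + 2) / (3 * real n + 3)) * (4 / 3 * (4 * real n + 3) / (3 * real n + 4)) * (5 / 4 * (4 * real n + 4) / (3 * real n + 5)) *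 (6 / 5 * (4 * real n + 5) / (3 * real n + 6))) + 12 * (tt 2 n * (3 / 2 * (4 * real n + 2) / (3 * real n + 3)) * (4 / 3 * (4 * real n + 3) / (3 * real n + 4)) * (5 / 4 * (4 * real n + 4) / (3 * real n + 5))) - 12 * (tt 2 n * (3 / 2 * (4 * real n + 2) / (3 * real n + 3)) * (4 / 3 * (4 * real n + 3) / (3 * real n + 4))) - 3 * (tt 2 n * (3 / 2 * (4 * real n + 2) / (3 * real n + 3))) + 6 * tt 2 n) / (tt 2 n / (real n + 1))"
    unfolding A_ratio_def g_pow3_nth[OF n] g_nth[OF n] ttp_3 ttp_4 ttp_5 ttp_6 ttp_7 ttp_8 ttp_9 ..
  also have "\<dots> = 5 * (real n - 1) * (real n - 2)
        * (5 * (real n)^4 + 160 * (real n)^3 + 1803 * (real n)^2 + 3768 * real n + 2016)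
        / (3 * (3 * real n + 8) * (3 * real n + 5) * (3 * real n + 7) * (3 * real n + 4)
             * (real n + 3) * (real n + 2))"
    by (rule key3) (use n tt_pos[of n] in simp_all)
  finally show ?thesis .
qed

lemma L3: "(\<lambda>n. A_ratio 3 n) \<longlonglongrightarrow> 25 / 243"
proof -
  have "(\<lambda>n::nat. 5 * (real n - 1) * (real n - 2)
        * (5 * (real n)^4 + 160 * (real n)^3 + 1803 * (real n)^2 + 3768 * real n + 2016)
        / (3 * (3 * real n + 8) * (3 * real n + 5) * (3 * real n + 7) * (3 * real n + 4)
             * (real n + 3) * (real n + 2))) \<longlonglongrightarrow> 25 / 243"
    by real_asymp
  moreover have "eventually (\<lambda>n. 5 * (real n - 1) * (real n - 2)
        * (5 * (real n)^4 + 160 * (real n)^3 + 1803 * (real n)^2 + 3768 * real n + 2016)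
        / (3 * (3 * real n + 8) * (3 * real n + 5) * (3 * real n + 7) * (3 * real n + 4)
             * (real n + 3) * (real n + 2)) = A_ratio 3 n) sequentially"
    using eventually_ge_at_top[of 1] by eventually_elim (simp add: A3)
  ultimately show ?thesis using Lim_transform_eventually by blast
qed

lemma gpow4_poly: fixes P :: "'a::comm_ring_1" shows "(2*P^2 - P^3 - 1)^4 = P^12 - 8 * P^11 + 24 * P^10 - 28 * P^9 - 8 * P^8 + 48 * P^7 - 26 * P^6 - 24 * P^5 + 24 * P^4 + 4 * P^3 - 8 * P^2 + 1"
  by (simp add: eval_nat_numeral algebra_simps)

lemma g_pow4: "g_fps^4 = PP 12 - 8 * PP 11 + 24 * PP 10 - 28 * PP 9 - 8 * PP 8 + 48 * PP 7 - 26 * PP 6 - 24 * PP 5 + 24 * PP 4 + 4 * PP 3 - 8 * PP 2 + 1"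
proof -
  have h: "g_fps = 2 * PP 1 ^ 2 - PP 1 ^ 3 - 1" by (simp only: g_eq PP_pow)
  have "g_fps^4 = PP 1^12 - 8 * PP 1^11 + 24 * PP 1^10 - 28 * PP 1^9 - 8 * PP 1^8 + 48 * PP 1^7 - 26 * PP 1^6 - 24 * PP 1^5 + 24 * PP 1^4 + 4 * PP 1^3 - 8 * PP 1^2 + 1" unfolding h by (rule gpow4_poly)
  then show ?thesis by (simp only: PP_pow)
qed

lemma g_pow4_nth: "n \<ge> 1 \<Longrightarrow> fps_nth (g_fps^4) n = tt 12 n - 8 * tt 11 n + 24 * tt 10 n - 28 * tt 9 n - 8 * tt 8 n + 48 * tt 7 n - 26 * tt 6 n - 24 * tt 5 n + 24 * tt 4 n + 4 * tt 3 n - 8 * tt 2 n"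
  by (simp add: g_pow4 PP_def numeral_fps_const)

lemma key4: "((T * (3 / 2 * (4 * x + 2) / (3 * x + 3)) * (4 / 3 * (4 * x + 3) / (3 * x + 4)) * (5 / 4 * (4 * x + 4) / (3 * x + 5)) * (6 / 5 * (4 * x + 5) / (3 * x + 6)) * (7 / 6 * (4 * x + 6) / (3 * x + 7)) * (8 / 7 * (4 * x + 7) / (3 * x + 8)) * (9 / 8 * (4 * x + 8) / (3 * x + 9)) * (10 / 9 * (4 * x + 9) / (3 * x + 10)) * (11 / 10 * (4 * x + 10) / (3 * x + 11)) * (12 / 11 * (4 * x + 11) / (3 * x + 12))) - 8 * (T * (3 / 2 * (4 * x + 2) / (3 * x + 3)) * (4 / 3 * (4 * x + 3) / (3 * x + 4)) * (5 / 4 * (4 * x + 4) / (3 * x + 5)) * (6 / 5 * (4 * x + 5) / (3 * x + 6)) * (7 / 6 * (4 * x + 6) / (3 * x + 7)) * (8 / 7 * (4 * x + 7) / (3 * x + 8)) * (9 / 8 * (4 * x + 8) / (3 * x + 9)) * (10 / 9 * (4 * x + 9) / (3 * x + 10)) * (11 / 10 * (4 * x + 10) / (3 * x + 11))) + 24 * (T * (3 / 2 * (4 * x + 2) / (3 * x + 3)) * (4 / 3 * (4 * x + 3) / (3 * x + 4)) * (5 / 4 * (4 * x + 4) / (3 * x + 5)) * (6 / 5 * (4 * x + 5) / (3 * x + 6)) * (7 / 6 * (4 * x + 6) / (3 * x + 7)) * (8 / 7 * (4 * x + 7) / (3 * x + 8)) * (9 / 8 * (4 * x + 8) / (3 * x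 + 9)) * (10 / 9 * (4 * x + 9) / (3 * x + 10))) - 28 * (T * (3 / 2 * (4 * x + 2) / (3 * x + 3)) * (4 / 3 * (4 * x + 3) / (3 * x + 4)) * (5 / 4 * (4 * x + 4) / (3 * x + 5)) * (6 / 5 * (4 * x + 5) / (3 * x + 6)) * (7 / 6 * (4 * x + 6) / (3 * x + 7)) * (8 / 7 * (4 * x + 7) / (3 * x + 8)) * (9 / 8 * (4 * x + 8) / (3 * x + 9))) - 8 * (T * (3 / 2 * (4 * x + 2) / (3 * x + 3)) * (4 / 3 * (4 * x + 3) / (3 * x + 4)) * (5 / 4 * (4 * x + 4) / (3 * x + 5)) * (6 / 5 * (4 * x + 5) / (3 * x + 6)) * (7 / 6 * (4 * x + 6) / (3 * x + 7)) * (8 / 7 * (4 * x + 7) / (3 * x + 8))) + 48 * (T * (3 / 2 * (4 * x + 2) / (3 * x + 3)) * (4 / 3 * (4 * x + 3) / (3 * x + 4)) * (5 / 4 * (4 * x + 4) / (3 * x + 5)) * (6 / 5 * (4 * x + 5) / (3 * x + 6)) * (7 / 6 * (4 * x + 6) / (3 * x + 7))) - 26 * (T * (3 / 2 * (4 * x + 2) / (3 * x + 3)) * (4 / 3 * (4 * x + 3) / (3 * x + 4)) * (5 / 4 * (4 * x + 4) / (3 * x + 5)) * (6 / 5 * (4 * x + 5) / (3 * x + 6))) - 24 * (T * (3 / 2 * (4 * x + 2) / (3 * x + 3)) * (4 / 3 * (4 * x + 3) / (3 * x + 4)) * (5 / 4 * (4 * x + 4) / (3 * x + 5))) + 24 *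 (T * (3 / 2 * (4 * x + 2) / (3 * x + 3)) * (4 / 3 * (4 * x + 3) / (3 * x + 4))) + 4 * (T * (3 / 2 * (4 * x + 2) / (3 * x + 3))) - 8 * T) / (T / (x + 1)) = 20 * (x - 1) * (x - 2) * (x - 3)
        * (25 * (x)^6 + 1350 * (x)^5 + 31495 * (x)^4 + 347406 * (x)^3
           + 1211092 * (x)^2 + 1580304 * x + 665280)
        / (27 * (3 * x + 11) * (3 * x + 8) * (3 * x + 5) * (3 * x + 10)
             * (3 * x + 7) * (3 * x + 4) * (x + 4) * (x + 3) * (x + 2))"
  if "T > 0" "x \<ge> 1" for T x :: real
proof -
  have "3 * x + 3 \<noteq> 0" "3 * x + 4 \<noteq> 0" "3 * x + 5 \<noteq> 0" "3 * x + 6 \<noteq> 0" "3 * x + 7 \<noteq> 0" "3 * x + 8 \<noteq> 0" "3 * x + 9 \<noteq> 0" "3 * x + 10 \<noteq> 0" "3 * x + 11 \<noteq> 0" "3 * x + 12 \<noteq> 0" "x + 1 \<noteq> 0" "x + 2 \<noteq> 0" "x + 3 \<noteq> 0" "x + 4 \<noteq> 0" "T \<noteq> 0" using that by simp_all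
  then show ?thesis using that by (simp add: divide_simps; simp add: algebra_simps eval_nat_numeral)
qed

lemma A4: "n \<ge> 1 \<Longrightarrow> A_ratio 4 n = 20 * (real n - 1) * (real n - 2) * (real n - 3)
        * (25 * (real n)^6 + 1350 * (real n)^5 + 31495 * (real n)^4 + 347406 * (real n)^3
           + 1211092 * (real n)^2 + 1580304 * real n + 665280)
        / (27 * (3 * real n + 11) * (3 * real n + 8) * (3 * real n + 5) * (3 * real n + 10)
             * (3 * real n + 7) * (3 * real n + 4) * (real n + 4) * (real n + 3) * (real n + 2))"
proof -
  assume n: "n \<ge> 1"
  have "A_ratio 4 n = ((tt 2 n * (3 / 2 * (4 * real n + 2) / (3 * real n + 3)) * (4 / 3 * (4 * real n + 3) / (3 * real n + 4)) * (5 / 4 * (4 * real n + 4) / (3 * real n + 5)) * (6 / 5 * (4 * real n + 5) / (3 * real n + 6)) * (7 / 6 * (4 * real n + 6) / (3 * real n + 7)) * (8 / 7 * (4 * real n + 7) / (3 * real n + 8)) * (9 / 8 * (4 * real n + 8) / (3 * real n + 9)) * (10 / 9 * (4 * real n + 9) / (3 * real n + 10)) * (11 / 10 * (4 * real n + 10) / (3 * real n + 11)) * (12 / 11 * (4 * real n + 11) / (3 * real n + 12))) - 8 * (tt 2 n * (3 / 2 * (4 * real n + 2) / (3 * real n + 3)) * (4 / 3 * (4 * real n + 3) / (3 * real n + 4)) * (5 / 4 * (4 * real n + 4) / (3 * real n + 5)) * (6 / 5 * (4 * real n + 5) / (3 * real n + 6)) * (7 / 6 * (4 * real n + 6) / (3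 * real n + 7)) * (8 / 7 * (4 * real n + 7) / (3 * real n + 8)) * (9 / 8 * (4 * real n + 8) / (3 * real n + 9)) * (10 / 9 * (4 * real n + 9) / (3 * real n + 10)) * (11 / 10 * (4 * real n + 10) / (3 * real n + 11))) + 24 * (tt 2 n * (3 / 2 * (4 * real n + 2) / (3 * real n + 3)) * (4 / 3 * (4 * real n + 3) / (3 * real n + 4)) * (5 / 4 * (4 * real n + 4) / (3 * real n + 5)) * (6 / 5 * (4 * real n + 5) / (3 * real n + 6)) * (7 / 6 * (4 * real n + 6) / (3 * real n + 7)) * (8 / 7 * (4 * real n + 7) / (3 * real n + 8)) * (9 / 8 * (4 * real n + 8) / (3 * real n + 9)) * (10 / 9 * (4 * real n + 9) / (3 * real n + 10))) - 28 * (tt 2 n * (3 / 2 * (4 * real n + 2) / (3 * real n + 3)) * (4 / 3 * (4 * real n + 3) / (3 * real n + 4)) * (5 / 4 * (4 * real n + 4) / (3 * real n + 5)) * (6 / 5 * (4 * real n + 5) / (3 * real n + 6)) * (7 / 6 * (4 * real n + 6) / (3 * real n + 7)) * (8 / 7 * (4 * real n + 7) / (3 * real n + 8)) * (9 / 8 * (4 * real n + 8) / (3 * real n + 9))) - 8 * (tt 2 n * (3 / 2 * (4 * real n + 2) / (3 * real n + 3)) * (4 / 3 * (4 * real n + 3) / (3 * real n + 4)) * (5 / 4 * (4 * real n + 4) / (3 * real n + 5)) * (6 / 5 * (4 * real n + 5) / (3 * real n + 6)) * (7 / 6 * (4 * real n + 6) / (3 * real n + 7)) * (8 / 7 * (4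 * real n + 7) / (3 * real n + 8))) + 48 * (tt 2 n * (3 / 2 * (4 * real n + 2) / (3 * real n + 3)) * (4 / 3 * (4 * real n + 3) / (3 * real n + 4)) * (5 / 4 * (4 * real n + 4) / (3 * real n + 5)) * (6 / 5 * (4 * real n + 5) / (3 * real n + 6)) * (7 / 6 * (4 * real n + 6) / (3 * real n + 7))) - 26 * (tt 2 n * (3 / 2 * (4 * real n + 2) / (3 * real n + 3)) * (4 / 3 * (4 * real n + 3) / (3 * real n + 4)) * (5 / 4 * (4 * real n + 4) / (3 * real n + 5)) * (6 / 5 * (4 * real n + 5) / (3 * real n + 6))) - 24 * (tt 2 n * (3 / 2 * (4 * real n + 2) / (3 * real n + 3)) * (4 / 3 * (4 * real n + 3) / (3 * real n + 4)) * (5 / 4 * (4 * real n + 4) / (3 * real n + 5))) + 24 * (tt 2 n * (3 / 2 * (4 * real n + 2) / (3 * real n + 3)) * (4 / 3 * (4 * real n + 3) / (3 * real n + 4))) + 4 * (tt 2 n * (3 / 2 * (4 * real n + 2) / (3 * real n + 3))) - 8 * tt 2 n) / (tt 2 n / (real n + 1))"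
    unfolding A_ratio_def g_pow4_nth[OF n] g_nth[OF n] ttp_3 ttp_4 ttp_5 ttp_6 ttp_7 ttp_8 ttp_9 ttp_10 ttp_11 ttp_12 ..
  also have "\<dots> = 20 * (real n - 1) * (real n - 2) * (real n - 3)
        * (25 * (real n)^6 + 1350 * (real n)^5 + 31495 * (real n)^4 + 347406 * (real n)^3
           + 1211092 * (real n)^2 + 1580304 * real n + 665280)
        / (27 * (3 * real n + 11) * (3 * real n + 8) * (3 * real n + 5) * (3 * real n + 10)
             * (3 * real n + 7) * (3 * real n + 4) * (real n + 4) * (real n + 3) * (real n + 2))"
    by (rule key4) (use n tt_pos[of n] in simp_all)
  finally show ?thesis .
qed

lemma L4: "(\<lambda>n. A_ratio 4 n) \<longlonglongrightarrow> 500 / 19683"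
proof -
  have "(\<lambda>n::nat. 20 * (real n - 1) * (real n - 2) * (real n - 3)
        * (25 * (real n)^6 + 1350 * (real n)^5 + 31495 * (real n)^4 + 347406 * (real n)^3
           + 1211092 * (real n)^2 + 1580304 * real n + 665280)
        / (27 * (3 * real n + 11) * (3 * real n + 8) * (3 * real n + 5) * (3 * real n + 10)
             * (3 * real n + 7) * (3 * real n + 4) * (real n + 4) * (real n + 3) * (real n + 2))) \<longlonglongrightarrow> 500 / 19683"
    by real_asymp
  moreover have "eventually (\<lambda>n. 20 * (real n - 1) * (real n - 2) * (real n - 3)
        * (25 * (real n)^6 + 1350 * (real n)^5 + 31495 * (real n)^4 + 347406 * (real n)^3
           + 1211092 * (real n)^2 + 1580304 * real n + 665280)
        / (27 * (3 * real n + 11) * (3 * real n + 8) * (3 * real n + 5) * (3 * real n + 10)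
             * (3 * real n + 7) * (3 * real n + 4) * (real n + 4) * (real n + 3) * (real n + 2)) = A_ratio 4 n) sequentially"
    using eventually_ge_at_top[of 1] by eventually_elim (simp add: A4)
  ultimately show ?thesis using Lim_transform_eventually by blast
qed


theorem mainTheorem3:
  shows "(\<forall>n::nat. n \<ge> 1 \<longrightarrow>
      A_ratio 2 n = 10 * (real n - 1) * ((real n)^2 + 14 * real n + 12)
        / (3 * (3 * real n + 5) * (3 * real n + 4) * (real n + 2))
    \<and> A_ratio 3 n = 5 * (real n - 1) * (real n - 2)
        * (5 * (real n)^4 + 160 * (real n)^3 + 1803 * (real n)^2 + 3768 * real n + 2016)
        / (3 * (3 * real n + 8) * (3 * real n + 5) * (3 * real n + 7) * (3 * real n + 4)
             * (real n + 3) * (real n + 2))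
    \<and> A_ratio 4 n = 20 * (real n - 1) * (real n - 2) * (real n - 3)
        * (25 * (real n)^6 + 1350 * (real n)^5 + 31495 * (real n)^4 + 347406 * (real n)^3
           + 1211092 * (real n)^2 + 1580304 * real n + 665280)
        / (27 * (3 * real n + 11) * (3 * real n + 8) * (3 * real n + 5) * (3 * real n + 10)
             * (3 * real n + 7) * (3 * real n + 4) * (real n + 4) * (real n + 3) * (real n + 2)))
    \<and> (\<lambda>n. A_ratio 2 n) \<longlonglongrightarrow> 10 / 27
    \<and> (\<lambda>n. A_ratio 3 n) \<longlonglongrightarrow> 25 / 243
    \<and> (\<lambda>n. A_ratio 4 n) \<longlonglongrightarrow> 500 / 19683"
    by (intro conjI allI impI; (erule A2 | erule A3 | erule A4 | rule L2 | rule L3 | rule L4))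

end
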